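(* Let $\mathcal F$ be a nonempty hereditary family of finite subsets of $\mathbb N$. Then there is an infinite set $M\subset\mathbb N$ such that one of the following holds: (a) there is $d\in\mathbb N\cup\{0\}$ such that $\mathcal F\cap\mathcal P(M)=[M]^{\le d}$; (b) there is a strictly increasing map $f\colon M\to\mathbb N$ such that $\{F\subset M: F\text{ finite nonempty},\ \#F\le f(\min F)\}\subset\mathcal F$.
   Context: A family $\mathcal F$ of sets is hereditary if $B\in\mathcal F$ whenever $B\subset A$ and $A\in\mathcal F$. $\mathcal P(M)$ is the power set of $M$ and $[M]^{\le d}$ is the family of all subsets of $M$ of cardinality at most $d$. *)

theory Defs
  imports Main
begin

definition hereditary :: "'a set set \<Rightarrow> bool" where
  "hereditary \<F> \<longleftrightarrow> (\<forall>A \<in> \<F>. \<forall>B. B \<subseteq> A \<longrightarrow> B \<in> \<F>)"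

definition subsets_upto :: "'a set \<Rightarrow> nat \<Rightarrow> 'a set set" where
  "subsets_upto M d = {A. A \<subseteq> M \<and> finite A \<and> card A \<le> d}"

end

theory Submission
  imports Defs "HOL-Library.Ramsey"
begin

definition homin :: "nat set set \<Rightarrow> nat \<Rightarrow> nat set \<Rightarrow> bool" where
  "homin \<F> k Y \<longleftrightarrow> (\<forall>X. X \<subseteq> Y \<and> finite X \<and> card X = k \<longrightarrow> X \<in> \<F>)"

lemma homin_mono: "homin \<F> k Y \<Longrightarrow> W \<subseteq> Y \<Longrightarrow> homin \<F> k W"
  unfolding homin_def by blast

lemma ramsey2:
  assumes "infinite (Z::nat set)"
  shows "\<exists>Y\<subseteq>Z. infinite Y \<and> (homin \<F> k Y \<or> (\<forall>X. X \<subseteq> Y \<and> finite X \<and> card X = k \<longrightarrow> X \<notin> \<F>))"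
proof -
  have "\<exists>Y t. Y \<subseteq> Z \<and> infinite Y \<and> t < 2
            \<and> (\<forall>X. X \<subseteq> Y \<and> finite X \<and> card X = k \<longrightarrow> (\<lambda>X. if X \<in> \<F> then 0 else 1::nat) X = t)"
    by (rule Ramsey) (use assms in auto)
  then obtain Y t where Y: "Y \<subseteq> Z" "infinite Y" "t < 2"
    "\<forall>X. X \<subseteq> Y \<and> finite X \<and> card X = k \<longrightarrow> (if X \<in> \<F> then 0 else 1::nat) = t" by blast
  show ?thesis
  proof (cases "t = 0")
    case True
    with Y show ?thesis unfolding homin_def by (metis one_neq_zero)
  next
    case False
    with Y show ?thesis by (metis)
  qed
qed

lemma iterate:
  assumes "\<forall>j<n. \<forall>Z. infinite Z \<longrightarrow> (\<exists>Y\<subseteq>Z. infinite Y \<and> homin \<F> j Y)"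
    and "infinite (Z::nat set)"
  shows "\<exists>Y\<subseteq>Z. infinite Y \<and> (\<forall>j<n. homin \<F> j Y)"
  using assms
proof (induction n)
  case 0
  then show ?case by blast
next
  case (Suc n)
  then obtain Y where Y: "Y \<subseteq> Z" "infinite Y" "\<forall>j<n. homin \<F> j Y" by auto
  from Suc.prems(1) Y(2) obtain W where W: "W \<subseteq> Y" "infinite W" "homin \<F> n W" by blast
  have "\<forall>j<Suc n. homin \<F> j W"
    using Y(3) W homin_mono by (metis less_Suc_eq)
  with W Y show ?case by blast
qed

primrec seqY :: "nat set set \<Rightarrow> nat \<Rightarrow> nat set" where
  "seqY \<F> 0 = UNIV"
| "seqY \<F> (Suc k) = (SOME W. W \<subseteq> seqY \<F> k - {LEAST x. x \<in> seqY \<F> k} \<and> infinite W \<and> homin \<F> (Suc k) W)"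

lemma caseB:
  assumes B: "\<forall>k Z. infinite (Z::nat set) \<longrightarrow> (\<exists>Y\<subseteq>Z. infinite Y \<and> homin \<F> k Y)"
  shows "\<exists>M. infinite M \<and>
            (\<exists>f::nat \<Rightarrow> nat. strict_mono_on M f \<and> (\<forall>x\<in>M. f x \<ge> 1) \<and>
               {F. F \<subseteq> M \<and> finite F \<and> F \<noteq> {} \<and> card F \<le> f (Min F)} \<subseteq> \<F>)"
proof -
  let ?Y = "seqY \<F>"
  have step: "infinite (?Y k) \<Longrightarrow> ?Y (Suc k) \<subseteq> ?Y k - {LEAST x. x \<in> ?Y k} \<and> infinite (?Y (Suc k)) \<and> homin \<F> (Suc k) (?Y (Suc k))" for k
  proof -
    assume "infinite (?Y k)"
    then have "infinite (?Y k - {LEAST x. x \<in> ?Y k})" by simp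
    then have "\<exists>W. W \<subseteq> ?Y k - {LEAST x. x \<in> ?Y k} \<and> infinite W \<and> homin \<F> (Suc k) W"
      using B by blast
    then show ?thesis unfolding seqY.simps by (rule someI_ex)
  qed
  have inf: "infinite (?Y k)" for k
    by (induction k) (use step in auto)
  have sub: "?Y (Suc k) \<subseteq> ?Y k - {LEAST x. x \<in> ?Y k}" for k using step inf by blast
  have hom: "homin \<F> (Suc k) (?Y (Suc k))" for k using step inf by blast
  have anti: "j \<le> k \<Longrightarrow> ?Y k \<subseteq> ?Y j" for j k
  proof (induction k rule: dec_induct)
    case base then show ?case by simp
  next
    case (step n) then show ?case using sub[of n] by blast
  qed
  define m where "m k = (LEAST x. x \<in> ?Y (Suc k))" for k
  have mY: "m k \<in> ?Y (Suc k)" for k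
  proof -
    obtain x where "x \<in> ?Y (Suc k)" using inf[of "Suc k"] by (metis finite.emptyI ex_in_conv)
    then show ?thesis unfolding m_def by (rule LeastI)
  qed
  have mle: "x \<in> ?Y (Suc k) \<Longrightarrow> m k \<le> x" for x k unfolding m_def by (rule Least_le)
  have msuc: "m k < m (Suc k)" for k
  proof -
    have "m (Suc k) \<in> ?Y (Suc k)" "m (Suc k) \<noteq> m k"
      using mY[of "Suc k"] sub[of "Suc k"] unfolding m_def by auto
    then show ?thesis using mle[of "m (Suc k)" k] by simp
  qed
  have smono: "strict_mono m" using msuc by (simp add: strict_mono_Suc_iff)
  have minj: "inj m" using smono by (rule strict_mono_imp_inj_on)
  define M where "M = range m"
  define f where "f x = Suc (inv m x)" for x
  have fm: "f (m k) = Suc k" for k unfolding f_def using minj by simp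
  have "infinite M" unfolding M_def using minj by (simp add: range_inj_infinite)
  moreover have "strict_mono_on M f"
    unfolding M_def strict_mono_on_def
    using fm smono by (auto simp: strict_mono_less)
  moreover have "\<forall>x\<in>M. f x \<ge> 1" unfolding M_def using fm by auto
  moreover have "{F. F \<subseteq> M \<and> finite F \<and> F \<noteq> {} \<and> card F \<le> f (Min F)} \<subseteq> \<F>"
  proof
    fix F assume F: "F \<in> {F. F \<subseteq> M \<and> finite F \<and> F \<noteq> {} \<and> card F \<le> f (Min F)}"
    then have FM: "F \<subseteq> M" and fin: "finite F" and ne: "F \<noteq> {}" and c: "card F \<le> f (Min F)" by auto
    have "Min F \<in> M" using FM fin ne Min_in by blast
    then obtain k where k: "Min F = m k" unfolding M_def by blast
    have FY: "F \<subseteq> ?Y (Suc k)"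
    proof
      fix x assume x: "x \<in> F"
      then obtain j where j: "x = m j" using FM unfolding M_def by blast
      have "m k \<le> m j" using k x j fin by (metis Min_le)
      then have "k \<le> j" using smono by (simp add: strict_mono_less_eq)
      then show "x \<in> ?Y (Suc k)" using anti[of "Suc k" "Suc j"] mY[of j] j by auto
    qed
    have "card F \<ge> 1" using fin ne by (simp add: Suc_le_eq card_gt_0_iff)
    then obtain j where j: "card F = Suc j" by (metis Suc_le_D One_nat_def)
    have "j \<le> k" using c j fm k by simp
    then have "F \<subseteq> ?Y (Suc j)" using FY anti[of "Suc j" "Suc k"] by auto
    then show "F \<in> \<F>" using hom[of j] fin j unfolding homin_def by blast
  qed
  ultimately show ?thesis by blast
qed

theorem lemma4p8:
  fixes \<F> :: "nat set set"
  assumes "\<F> \<noteq> {}"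
    and "\<forall>A \<in> \<F>. finite A"
    and "hereditary \<F>"
  shows "\<exists>M. infinite M \<and>
           ((\<exists>d::nat. \<F> \<inter> Pow M = subsets_upto M d) \<or>
            (\<exists>f::nat \<Rightarrow> nat. strict_mono_on M f \<and> (\<forall>x\<in>M. f x \<ge> 1) \<and>
               {F. F \<subseteq> M \<and> finite F \<and> F \<noteq> {} \<and> card F \<le> f (Min F)} \<subseteq> \<F>))"
proof -
  define P where "P k \<longleftrightarrow> (\<forall>Z. infinite (Z::nat set) \<longrightarrow> (\<exists>Y\<subseteq>Z. infinite Y \<and> homin \<F> k Y))" for k
  have emp: "{} \<in> \<F>" using assms(1,3) unfolding hereditary_def by blast
  show ?thesis
  proof (cases "\<forall>k. P k")
    case True
    then show ?thesis using caseB[of \<F>] unfolding P_def by blast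
  next
    case False
    define k where "k = (LEAST k. \<not> P k)"
    have nPk: "\<not> P k" unfolding k_def using False by (metis LeastI)
    have Pj: "\<forall>j<k. P j" unfolding k_def using not_less_Least by blast
    have "P 0" unfolding P_def homin_def using emp by auto
    then have k0: "k \<noteq> 0" using nPk by (cases k) auto
    obtain Z where Z: "infinite Z" "\<not> (\<exists>Y\<subseteq>Z. infinite Y \<and> homin \<F> k Y)"
      using nPk unfolding P_def by blast
    obtain Y where Y: "Y \<subseteq> Z" "infinite Y" "\<forall>j<k. homin \<F> j Y"
      using iterate[of k \<F> Z] Pj Z(1) unfolding P_def by blast
    obtain W where W: "W \<subseteq> Y" "infinite W"
      "homin \<F> k W \<or> (\<forall>X. X \<subseteq> W \<and> finite X \<and> card X = k \<longrightarrow> X \<notin> \<F>)"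
      using ramsey2[OF Y(2), of \<F> k] by blast
    have out: "\<forall>X. X \<subseteq> W \<and> finite X \<and> card X = k \<longrightarrow> X \<notin> \<F>"
      using W Y(1) Z(2) by blast
    have "\<F> \<inter> Pow W = subsets_upto W (k - 1)"
    proof
      show "\<F> \<inter> Pow W \<subseteq> subsets_upto W (k - 1)"
      proof
        fix A assume A: "A \<in> \<F> \<inter> Pow W"
        then have fin: "finite A" using assms(2) by blast
        have "card A < k"
        proof (rule ccontr)
          assume "\<not> card A < k"
          then obtain B where B: "B \<subseteq> A" "card B = k"
            by (meson not_less obtain_subset_with_card_n)
          then have "B \<in> \<F>" using A assms(3) unfolding hereditary_def by blast
          moreover have "finite B" using B fin finite_subset by blast
          ultimately show False using out B A by blast
        qed
        then show "A \<in> subsets_upto W (k - 1)" using A fin unfolding subsets_upto_def by auto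
      qed
    next
      show "subsets_upto W (k - 1) \<subseteq> \<F> \<inter> Pow W"
      proof
        fix A assume A: "A \<in> subsets_upto W (k - 1)"
        then have "card A < k" "A \<subseteq> W" "finite A" using k0 unfolding subsets_upto_def by auto
        then show "A \<in> \<F> \<inter> Pow W" using Y(3) W(1) unfolding homin_def by blast
      qed
    qed
    then show ?thesis using W(2) by blast
  qed
qed

end
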